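(* Let $p$ be a prime and $n$ an integer with $p>n\ge2$, let $q$ be a power of $p$, and let $\mathrm{disc}_n\in\mathbb{F}_q[a_0,\dots,a_n]$ be the generic discriminant of $\sum_{0\le i\le n}a_ix^i$. Then there is no nonzero $u\in\mathbb{F}_q^{n+1}$ with $\mathrm{disc}_n(a_0-u_0,\dots,a_n-u_n)=\mathrm{disc}_n(a_0,\dots,a_n)$; i.e. $\mathrm{disc}_n$ is not shift-invariant.
   Context: The generic discriminant $\mathrm{disc}_n$ is the reduction modulo $p$ of the integer polynomial in $a_0,\dots,a_n$ equal to $(-1)^{n(n-1)/2}a_n^{-1}\mathrm{Res}(f,f')$ for $f=\sum_{i}a_ix^i$ (equivalently $a_n^{2n-2}\prod_{i<j}(\alpha_i-\alpha_j)^2$ with $\alpha_i$ the roots of $f$); it is absolutely irreducible of degree $2n-2$ and its zero set is the hypersurface of non-squarefree polynomials. *)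

theory Defs
  imports "HOL-Library.Poly_Mapping" "HOL-Computational_Algebra.Polynomial"
    "Subresultants.Resultant_Prelim"
begin

text \<open>Multivariate polynomials over 'a in the variables a_0, a_1, ... (indexed by nat):
  finitely supported maps from monomials (exponent vectors) to coefficients.\<close>
type_synonym 'a mpoly = "(nat \<Rightarrow>\<^sub>0 nat) \<Rightarrow>\<^sub>0 'a"

definition mvar :: "nat \<Rightarrow> 'a::comm_semiring_1 mpoly" where
  "mvar i = Poly_Mapping.single (Poly_Mapping.single i 1) 1"

definition mconst :: "'a::comm_semiring_1 \<Rightarrow> 'a mpoly" where
  "mconst c = Poly_Mapping.single 0 c"

definition msubst :: "(nat \<Rightarrow> 'a::comm_semiring_1 mpoly) \<Rightarrow> 'a mpoly \<Rightarrow> 'a mpoly" where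
  "msubst \<sigma> P = (\<Sum>m\<in>Poly_Mapping.keys P.
      mconst (Poly_Mapping.lookup P m) * (\<Prod>i\<in>Poly_Mapping.keys m. \<sigma> i ^ Poly_Mapping.lookup m i))"

definition gen_poly :: "nat \<Rightarrow> (nat \<Rightarrow> 'b::comm_semiring_1) \<Rightarrow> 'b poly" where
  "gen_poly n c = (\<Sum>i\<le>n. monom (c i) i)"

definition generic_disc :: "nat \<Rightarrow> 'a::idom mpoly" where
  "generic_disc n = (THE d. mvar n * d =
      (-1) ^ (n * (n - 1) div 2) * resultant (gen_poly n mvar) (pderiv (gen_poly n mvar)))"

end

theory Submission imports Defs begin

definition mmono :: "(nat \<Rightarrow> 'b::comm_semiring_1) \<Rightarrow> (nat \<Rightarrow>\<^sub>0 nat) \<Rightarrow> 'b" where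
  "mmono c m = (\<Prod>i\<in>Poly_Mapping.keys m. c i ^ Poly_Mapping.lookup m i)"

lemma mono_superset: "finite S \<Longrightarrow>Poly_Mapping.keys m \<subseteq> S \<Longrightarrow> mmono c m = (\<Prod>i\<in>S. c i ^ Poly_Mapping.lookup m i)"
  unfolding mmono_def by (rule prod.mono_neutral_left) (auto simp: in_keys_iff)

lemma mono_add: "mmono c (m1 + m2) = mmono c m1 * mmono c m2"
proof -
  let ?S = "Poly_Mapping.keys m1 \<union>Poly_Mapping.keys m2"
  have "mmono c (m1 + m2) = (\<Prod>i\<in>?S. c i ^ Poly_Mapping.lookup (m1+m2) i)"
    by (rule mono_superset) (auto simp: keys_add)
  also have "\<dots> = (\<Prod>i\<in>?S. c i ^ Poly_Mapping.lookup m1 i) * (\<Prod>i\<in>?S. c i ^ Poly_Mapping.lookup m2 i)"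
    by (simp add: lookup_add power_add prod.distrib)
  also have "\<dots> = mmono c m1 * mmono c m2"
    by (simp add: mono_superset[symmetric])
  finally show ?thesis .
qed

lemma mono_zero[simp]: "mmono c 0 = 1" by (simp add: mmono_def)

definition ev :: "(nat \<Rightarrow> 'a::comm_ring_1 poly) \<Rightarrow> 'a mpoly \<Rightarrow> 'a poly" where
  "ev c P = (\<Sum>m\<in>Poly_Mapping.keys P. Polynomial.smult (Poly_Mapping.lookup P m) (mmono c m))"

lemma ev_superset: "finite S \<Longrightarrow>Poly_Mapping.keys P \<subseteq> S \<Longrightarrow> ev c P = (\<Sum>m\<in>S. Polynomial.smult (Poly_Mapping.lookup P m) (mmono c m))"
  unfolding ev_def by (rule sum.mono_neutral_left) (auto simp: in_keys_iff)

lemma ev_add: "ev c (P + Q) = ev c P + ev c Q"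
proof -
  let ?S = "Poly_Mapping.keys P \<union>Poly_Mapping.keys Q"
  have "ev c (P + Q) = (\<Sum>m\<in>?S. Polynomial.smult (Poly_Mapping.lookup (P+Q) m) (mmono c m))"
    by (rule ev_superset) (auto simp: keys_add)
  also have "\<dots> = (\<Sum>m\<in>?S. Polynomial.smult (Poly_Mapping.lookup P m) (mmono c m)) + (\<Sum>m\<in>?S. Polynomial.smult (Poly_Mapping.lookup Q m) (mmono c m))"
    by (simp add: lookup_add sum.distrib smult_add_left)
  also have "\<dots> = ev c P + ev c Q"
    by (simp add: ev_superset[symmetric])
  finally show ?thesis .
qed

lemma ev_zero[simp]: "ev c 0 = 0" by (simp add: ev_def)

lemma ev_sum: "ev c (sum f A) = (\<Sum>a\<in>A. ev c (f a))"
  by (induction A rule: infinite_finite_induct) (auto simp: ev_add)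

lemma ev_single[simp]: "ev c (Poly_Mapping.single m a) = Polynomial.smult a (mmono c m)"
  by (simp add: ev_def)

lemma pm_sum_single: "P = (\<Sum>m\<in>Poly_Mapping.keys P. Poly_Mapping.single m (Poly_Mapping.lookup P m))"
  by (rule poly_mapping_eqI) (simp add: lookup_sum lookup_single when_def in_keys_iff)

lemma ev_mult: "ev c (P * Q) = ev c P * ev c Q"
proof -
  have "P * Q = (\<Sum>m\<in>Poly_Mapping.keys P. \<Sum>m'\<in>Poly_Mapping.keys Q. Poly_Mapping.single (m+m') (Poly_Mapping.lookup P m * Poly_Mapping.lookup Q m'))"
    apply (subst pm_sum_single[of P], subst pm_sum_single[of Q])
    by (simp add: sum_distrib_left sum_distrib_right mult_single sum.swap[of _ "Poly_Mapping.keys Q"])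
  hence "ev c (P * Q) = (\<Sum>m\<in>Poly_Mapping.keys P. \<Sum>m'\<in>Poly_Mapping.keys Q. Polynomial.smult (Poly_Mapping.lookup P m * Poly_Mapping.lookup Q m') (mmono c (m+m')))"
    by (simp add: ev_sum)
  also have "\<dots> = (\<Sum>m\<in>Poly_Mapping.keys P. \<Sum>m'\<in>Poly_Mapping.keys Q. (Polynomial.smult (Poly_Mapping.lookup P m) (mmono c m)) * ([:Poly_Mapping.lookup Q m':] * mmono c m'))"
    by (simp add: mono_add mult_ac)
  also have "\<dots> = ev c P * ev c Q"
    by (simp add: ev_def sum_product)
  finally show ?thesis .
qed

lemma ev_one: "ev c 1 = 1"
  by (simp flip: single_one)

interpretation ev_hom: comm_ring_hom "ev c"
  by standard (simp_all add: ev_add ev_mult ev_one)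

definition rp :: "'a::comm_semiring_1 poly \<Rightarrow> 'a poly \<Rightarrow> nat \<Rightarrow> 'a poly" where
  "rp p q i = (if i < degree q then monom 1 (degree q - i) * p
               else monom 1 (degree p + degree q - i) * q)"

lemma sylv_rp: "i < degree p + degree q \<Longrightarrow> j < degree p + degree q \<Longrightarrow>
  sylvester_mat p q $$ (i,j) = coeff (rp p q i) (degree p + degree q - j)"
  unfolding rp_def by (subst sylvester_index_mat2) auto

lemma rp_coeff0: "i < degree p + degree q \<Longrightarrow> coeff (rp p q i) 0 = 0"
  unfolding rp_def by (auto simp: coeff_monom_mult)

lemma rp_degree: "i < degree p + degree q \<Longrightarrow> degree (rp p q i) \<le> degree p + degree q"
proof -
  assume i: "i < degree p + degree q"
  have "degree (monom (1::'a) e * r) \<le> e + degree r" for e and r :: "'a poly"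
    by (rule order.trans[OF degree_mult_le]) (simp add: degree_monom_le add_right_mono)
  from this[of "degree q - i" p] this[of "degree p + degree q - i" q] i
  show ?thesis unfolding rp_def by auto
qed

lemma poly_rev_sum:
  fixes h :: "'a::comm_ring_1 poly"
  assumes "degree h \<le> N" "coeff h 0 = 0"
  shows "(\<Sum>j<N. coeff h (N - j) * r ^ (N - j)) = poly h r"
proof -
  have "poly h r = (\<Sum>d<Suc N. coeff h d * r ^ d)"
    unfolding poly_altdef
    by (rule sum.mono_neutral_left) (use assms in \<open>auto simp: coeff_eq_0\<close>)
  also have "\<dots> = (\<Sum>i<N. coeff h (Suc i) * r ^ Suc i)"
    by (subst sum.lessThan_Suc_shift) (simp add: assms)
  also have "\<dots> = (\<Sum>j<N. coeff h (N - j) * r ^ (N - j))"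
    using sum.atLeastLessThan_rev[of "\<lambda>i. coeff h (Suc i) * r ^ Suc i" 0 N]
    by (simp add: lessThan_atLeast0 Suc_diff_Suc)
  finally show ?thesis by simp
qed

lemma resultant_common_root:
  fixes p q :: "'a::idom poly"
  assumes "poly p r = 0" "poly q r = 0" "r \<noteq> 0" "0 < degree p + degree q"
  shows "resultant p q = 0"
proof -
  define N where "N = degree p + degree q"
  define S where "S = sylvester_mat p q"
  have S: "S \<in> carrier_mat N N" unfolding S_def N_def by (rule sylvester_carrier_mat)
  define v where "v = vec N (\<lambda>j. r ^ (N - j))"
  have v: "v \<in> carrier_vec N" unfolding v_def by simp
  have "v $ 0 \<noteq> 0" using assms unfolding v_def N_def by simp
  hence v0: "v \<noteq> 0\<^sub>v N" using assms unfolding N_def by auto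
  have "S *\<^sub>v v = 0\<^sub>v N"
  proof (rule eq_vecI)
    fix i assume "i < dim_vec (0\<^sub>v N :: 'a vec)"
    hence i: "i < N" by simp
    have "(S *\<^sub>v v) $ i = (\<Sum>j<N. coeff (rp p q i) (N - j) * r ^ (N - j))"
      using S i
      by (auto simp: v_def S_def N_def scalar_prod_def sylv_rp lessThan_atLeast0 intro!: sum.cong)
    also have "\<dots> = poly (rp p q i) r"
      by (rule poly_rev_sum) (use i rp_degree rp_coeff0 in \<open>auto simp: N_def\<close>)
    also have "\<dots> = 0" using assms unfolding rp_def by auto
    finally show "(S *\<^sub>v v) $ i = 0\<^sub>v N $ i" using i by simp
  qed (use S in auto)
  hence "det S = 0" using det_0_iff_vec_prod_zero[OF S] v v0 by blast
  thus ?thesis unfolding resultant_def S_def .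
qed

lemma coeff_sum_monom_rev:
  fixes w :: "nat \<Rightarrow> 'a::comm_ring_1"
  assumes "a \<le> i" "i < b"
  shows "coeff (\<Sum>i'\<in>{a..<b}. smult (w i') (monom 1 (b - 1 - i'))) (b - 1 - i) = w i"
proof -
  have "coeff (\<Sum>i'\<in>{a..<b}. smult (w i') (monom 1 (b - 1 - i'))) (b - 1 - i)
     = (\<Sum>i'\<in>{a..<b}. if i' = i then w i' else 0)"
    unfolding coeff_sum using assms
    by (intro sum.cong) (auto simp: coeff_monom)
  also have "\<dots> = w i" using assms by (simp add: sum.delta)
  finally show ?thesis .
qed

lemma degree_sum_monom_rev:
  fixes w :: "nat \<Rightarrow> 'a::comm_ring_1"
  shows "degree (\<Sum>i'\<in>{a..<b}. smult (w i') (monom 1 (b - 1 - i'))) \<le> b - 1"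
  by (rule degree_sum_le) (auto intro!: order.trans[OF degree_smult_le] order.trans[OF degree_monom_le])

lemma resultant_nonzero:
  fixes p q :: "'a::idom poly"
  assumes bez: "C * p + E * q = [:c:]" and c: "c \<noteq> 0" and dq: "0 < degree q"
  shows "resultant p q \<noteq> 0"
proof
  assume res: "resultant p q = 0"
  define k where "k = degree q"
  define N where "N = degree p + degree q"
  define S where "S = sylvester_mat p q"
  have S: "S \<in> carrier_mat N N" unfolding S_def N_def by (rule sylvester_carrier_mat)
  have ST: "transpose_mat S \<in> carrier_mat N N" using S by simp
  have "det (transpose_mat S) = 0" using res det_transpose[OF S] unfolding resultant_def S_def by simp
  then obtain w where w: "w \<in> carrier_vec N" "w \<noteq> 0\<^sub>v N" "transpose_mat S *\<^sub>v w = 0\<^sub>v N"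
    using det_0_iff_vec_prod_zero[OF ST] by blast
  define H where "H = (\<Sum>i<N. smult (w $ i) (rp p q i))"
  have H0: "H = 0"
  proof (rule poly_eqI)
    fix d
    have cH: "coeff H d = (\<Sum>i<N. w $ i * coeff (rp p q i) d)"
      unfolding H_def coeff_sum by simp
    show "coeff H d = coeff 0 d"
    proof (cases "d = 0 \<or> N < d")
      case True
      have "\<And>i. i < N \<Longrightarrow> coeff (rp p q i) d = 0"
        using True rp_coeff0 rp_degree unfolding N_def
        by (metis coeff_eq_0 le_less_trans)
      then show ?thesis using cH by simp
    next
      case False
      define j where "j = N - d"
      have j: "j < N" "d = N - j" using False unfolding j_def by auto
      have "(transpose_mat S *\<^sub>v w) $ j = (\<Sum>i<N. S $$ (i, j) * w $ i)"
        using S j w(1) by (auto simp: scalar_prod_def lessThan_atLeast0 intro!: sum.cong)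
      also have "\<dots> = (\<Sum>i<N. w $ i * coeff (rp p q i) d)"
        using j by (auto simp: S_def N_def sylv_rp intro!: sum.cong)
      finally show ?thesis using w(3) j cH by simp
    qed
  qed
  define A where "A = (\<Sum>i\<in>{0..<k}. smult (w $ i) (monom 1 (k - 1 - i)))"
  define B where "B = (\<Sum>i\<in>{k..<N}. smult (w $ i) (monom 1 (N - 1 - i)))"
  have kN: "k \<le> N" unfolding k_def N_def by simp
  have "H = (\<Sum>i\<in>{0..<k}. smult (w $ i) (rp p q i)) + (\<Sum>i\<in>{k..<N}. smult (w $ i) (rp p q i))"
    unfolding H_def lessThan_atLeast0 using kN by (simp add: sum.atLeastLessThan_concat)
  also have "(\<Sum>i\<in>{0..<k}. smult (w $ i) (rp p q i)) = monom 1 1 * (A * p)"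
  proof -
    have "\<And>i. i \<in> {0..<k} \<Longrightarrow> smult (w $ i) (rp p q i) = monom 1 1 * (smult (w $ i) (monom 1 (k - 1 - i)) * p)"
      by (auto simp: rp_def k_def mult_monom mult_ac Suc_diff_Suc)
    thus ?thesis unfolding A_def by (simp add: sum_distrib_left sum_distrib_right)
  qed
  also have "(\<Sum>i\<in>{k..<N}. smult (w $ i) (rp p q i)) = monom 1 1 * (B * q)"
  proof -
    have "\<And>i. i \<in> {k..<N} \<Longrightarrow> smult (w $ i) (rp p q i) = monom 1 1 * (smult (w $ i) (monom 1 (N - 1 - i)) * q)"
      by (auto simp: rp_def k_def N_def mult_monom mult_ac Suc_diff_Suc)
    thus ?thesis unfolding B_def by (simp add: sum_distrib_left sum_distrib_right)
  qed
  finally have "monom 1 1 * (A * p + B * q) = 0" using H0 by (simp add: distrib_left)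
  hence AB: "A * p + B * q = 0" by simp
  have "smult c A = A * [:c:]" by simp
  also have "\<dots> = A * (C * p + E * q)" using bez by simp
  also have "\<dots> = C * (A * p + B * q) + q * (E * A - C * B)" by (simp add: algebra_simps)
  finally have "q dvd smult c A" using AB by simp
  have A0: "A = 0"
  proof (rule ccontr)
    assume "A \<noteq> 0"
    hence "smult c A \<noteq> 0" using c by simp
    from dvd_imp_degree_le[OF \<open>q dvd smult c A\<close> this] have "degree q \<le> degree A" using c by simp
    moreover have "degree A \<le> k - 1" unfolding A_def by (rule degree_sum_monom_rev)
    ultimately show False using dq unfolding k_def by simp
  qed
  have B0: "B = 0" using AB A0 dq by auto
  have "w = 0\<^sub>v N"
  proof (rule eq_vecI)
    fix i assume "i < dim_vec (0\<^sub>v N :: 'a vec)"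
    hence i: "i < N" by simp
    show "w $ i = 0\<^sub>v N $ i"
    proof (cases "i < k")
      case True
      have "coeff A (k - 1 - i) = w $ i" unfolding A_def
        by (rule coeff_sum_monom_rev) (use True in auto)
      thus ?thesis using A0 i by simp
    next
      case False
      have "coeff B (N - 1 - i) = w $ i" unfolding B_def
        by (rule coeff_sum_monom_rev) (use False i in auto)
      thus ?thesis using B0 i by simp
    qed
  qed (use w(1) in auto)
  with w(2) show False by simp
qed


lemma ev_mvar[simp]: "ev c (mvar i) = c i"
  by (simp add: mvar_def mmono_def)

lemma ev_mconst[simp]: "ev c (mconst a) = [:a:]"
  by (simp add: mconst_def)

lemma ev_msubst: "ev c (msubst \<sigma> P) = ev (\<lambda>i. ev c (\<sigma> i)) P"
  unfolding msubst_def
  by (simp add: ev_hom.hom_sum ev_hom.hom_prod ev_hom.hom_power ev_mult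
       ev_def[of "\<lambda>i. ev c (\<sigma> i)" P] mmono_def)

lemma coeff_gen_poly: "coeff (gen_poly n c) i = (if i \<le> n then c i else 0)"
  unfolding gen_poly_def coeff_sum coeff_monom by (simp add: sum.delta)

lemma degree_gen_poly: "c n \<noteq> 0 \<Longrightarrow> degree (gen_poly n c) = n"
  by (intro antisym degree_le le_degree) (auto simp: coeff_gen_poly)

lemma degree_pderiv_eq:
  fixes f :: "'b::idom poly"
  assumes "degree f = n" "0 < n" "of_nat n * coeff f n \<noteq> 0"
  shows "degree (pderiv f) = n - 1"
proof (intro antisym degree_le le_degree allI impI)
  show "coeff (pderiv f) (n - 1) \<noteq> 0" using assms by (simp add: coeff_pderiv)
next
  fix i assume "n - 1 < i"
  thus "coeff (pderiv f) i = 0" using assms by (simp add: coeff_pderiv coeff_eq_0)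
qed

lemma map_gen_poly: "map_poly (ev c) (gen_poly n mvar) = gen_poly n c"
  by (rule poly_eqI) (simp add: coeff_map_poly coeff_gen_poly)


interpretation ev_idom: idom_hom "ev c :: 'a::idom mpoly \<Rightarrow> _"
  by unfold_locales (simp_all add: ev_add ev_mult ev_one)

lemma mvar_nz: "mvar i \<noteq> (0::'a::comm_semiring_1 mpoly)"
proof
  assume "mvar i = (0::'a mpoly)"
  hence "Poly_Mapping.lookup (mvar i :: 'a mpoly) (Poly_Mapping.single i 1) = 0" by simp
  thus False unfolding mvar_def by simp
qed

lemma of_nat_mpoly_nz: "of_nat n \<noteq> (0::'a::comm_semiring_1) \<Longrightarrow> of_nat n \<noteq> (0::'a mpoly)"
proof
  assume "of_nat n \<noteq> (0::'a)" "of_nat n = (0::'a mpoly)"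
  hence "Poly_Mapping.lookup (of_nat n :: 'a mpoly) 0 = 0" by simp
  with \<open>of_nat n \<noteq> (0::'a)\<close> show False by (simp add: lookup_of_nat)
qed

lemma gen_poly_facts:
  fixes n :: nat
  assumes n: "1 \<le> n" and ch: "of_nat n \<noteq> (0::'a::idom)"
  shows "degree (gen_poly n mvar :: 'a mpoly poly) = n"
    "coeff (gen_poly n mvar :: 'a mpoly poly) n = mvar n"
    "degree (pderiv (gen_poly n mvar :: 'a mpoly poly)) = n - 1"
    "coeff (pderiv (gen_poly n mvar :: 'a mpoly poly)) (n - 1) = of_nat n * mvar n"
proof -
  show d: "degree (gen_poly n mvar :: 'a mpoly poly) = n"
    by (rule degree_gen_poly) (rule mvar_nz)
  show c: "coeff (gen_poly n mvar :: 'a mpoly poly) n = mvar n" by (simp add: coeff_gen_poly)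
  have nz: "of_nat n * (mvar n :: 'a mpoly) \<noteq> 0"
    using of_nat_mpoly_nz[OF ch] mvar_nz by simp
  show "degree (pderiv (gen_poly n mvar :: 'a mpoly poly)) = n - 1"
    by (rule degree_pderiv_eq[OF d]) (use n nz c in auto)
  show "coeff (pderiv (gen_poly n mvar :: 'a mpoly poly)) (n - 1) = of_nat n * mvar n"
    using n c by (simp add: coeff_pderiv)
qed

lemma disc_dvd:
  fixes n :: nat
  assumes n: "1 \<le> n" and ch: "of_nat n \<noteq> (0::'a::idom)"
  shows "mvar n dvd resultant (gen_poly n mvar) (pderiv (gen_poly n mvar) :: 'a mpoly poly)"
proof -
  let ?F = "gen_poly n mvar :: 'a mpoly poly"
  let ?G = "pderiv ?F"
  note gf = gen_poly_facts[OF n ch]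
  define N where "N = degree ?F + degree ?G"
  define S where "S = sylvester_mat ?F ?G"
  have S: "S \<in> carrier_mat N N" unfolding S_def N_def by (rule sylvester_carrier_mat)
  have N0: "0 < N" using gf n unfolding N_def by simp
  have "resultant ?F ?G = (\<Sum>i<N. S $$ (i, 0) * cofactor S i 0)"
    unfolding resultant_def S_def[symmetric] by (rule laplace_expansion_column[OF S N0])
  also have "mvar n dvd \<dots>"
  proof (rule dvd_sum)
    fix i assume "i \<in> {..<N}"
    hence i: "i < N" by simp
    have "mvar n dvd S $$ (i, 0)"
      unfolding S_def using i N0 gf unfolding N_def
      by (subst sylvester_index_mat; cases "i = n - 1") (auto simp: le_diff_conv)
    thus "mvar n dvd S $$ (i, 0) * cofactor S i 0" by simp
  qed
  finally show ?thesis .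
qed

lemma disc_eq:
  fixes n :: nat
  assumes n: "1 \<le> n" and ch: "of_nat n \<noteq> (0::'a::idom)"
  shows "mvar n * (generic_disc n :: 'a mpoly) =
     (-1) ^ (n * (n - 1) div 2) * resultant (gen_poly n mvar) (pderiv (gen_poly n mvar))"
proof -
  let ?R = "(-1) ^ (n * (n - 1) div 2) * resultant (gen_poly n mvar) (pderiv (gen_poly n mvar)) :: 'a mpoly"
  obtain d where d: "resultant (gen_poly n mvar) (pderiv (gen_poly n mvar)) = mvar n * (d :: 'a mpoly)"
    using disc_dvd[OF n ch] by (auto elim: dvdE)
  have "\<exists>!d. mvar n * d = ?R"
  proof
    show "mvar n * ((-1) ^ (n * (n - 1) div 2) * d) = ?R" using d by (simp add: mult_ac)
  next
    fix d' assume "mvar n * d' = ?R"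
    hence "mvar n * d' = mvar n * ((-1) ^ (n * (n - 1) div 2) * d)" using d by (simp add: mult_ac)
    thus "d' = (-1) ^ (n * (n - 1) div 2) * d" by (rule mult_left_cancel[OF mvar_nz, THEN iffD1])
  qed
  from theI'[OF this] show ?thesis unfolding generic_disc_def .
qed

lemma ev_disc:
  fixes n :: nat and c :: "nat \<Rightarrow> 'a::idom poly"
  assumes n: "1 \<le> n" and ch: "of_nat n \<noteq> (0::'a)" and cn: "c n \<noteq> 0"
  shows "c n * ev c (generic_disc n) =
     (-1) ^ (n * (n - 1) div 2) * resultant (gen_poly n c) (pderiv (gen_poly n c))"
proof -
  note gf = gen_poly_facts[OF n ch]
  have dc: "degree (gen_poly n c) = n" using cn by (rule degree_gen_poly)
  have chp: "of_nat n * c n \<noteq> 0" using ch cn by (simp add: of_nat_poly)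
  have dc': "degree (pderiv (gen_poly n c)) = n - 1"
    by (rule degree_pderiv_eq[OF dc]) (use n chp in \<open>auto simp: coeff_gen_poly\<close>)
  have m1: "map_poly (ev c) (gen_poly n mvar :: 'a mpoly poly) = gen_poly n c" by (rule map_gen_poly)
  have m2: "map_poly (ev c) (pderiv (gen_poly n mvar :: 'a mpoly poly)) = pderiv (gen_poly n c)"
    unfolding ev_idom.map_poly_pderiv m1 ..
  have r0: "resultant (map_poly (ev c) (gen_poly n mvar :: 'a mpoly poly)) (map_poly (ev c) (pderiv (gen_poly n mvar :: 'a mpoly poly)))
      = ev c (resultant (gen_poly n mvar :: 'a mpoly poly) (pderiv (gen_poly n mvar :: 'a mpoly poly)))"
  proof (rule ev_hom.resultant_map_poly[of c "gen_poly n mvar :: 'a mpoly poly" "pderiv (gen_poly n mvar :: 'a mpoly poly)"])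
    show "degree (map_poly (ev c) (gen_poly n mvar :: 'a mpoly poly)) = degree (gen_poly n mvar :: 'a mpoly poly)"
      using dc gf(1) unfolding m1 by simp
    show "degree (map_poly (ev c) (pderiv (gen_poly n mvar :: 'a mpoly poly))) = degree (pderiv (gen_poly n mvar :: 'a mpoly poly))"
      using dc' gf(3) unfolding m2 by simp
  qed
  have r: "ev c (resultant (gen_poly n mvar :: 'a mpoly poly) (pderiv (gen_poly n mvar :: 'a mpoly poly))) =
      resultant (gen_poly n c) (pderiv (gen_poly n c))"
    using r0 unfolding m1 m2 by (rule sym)
  have s: "ev c ((-1) ^ k) = (-1) ^ k" for k
    by (simp only: ev_hom.hom_power ev_hom.hom_uminus ev_one)
  have "c n * ev c (generic_disc n) = ev c (mvar n * generic_disc n :: 'a mpoly)"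
    by (simp only: ev_mult ev_mvar)
  also have "\<dots> = ev c ((-1) ^ (n * (n - 1) div 2)) *
      ev c (resultant (gen_poly n mvar :: 'a mpoly poly) (pderiv (gen_poly n mvar :: 'a mpoly poly)))"
    unfolding disc_eq[OF n ch] by (rule ev_mult)
  finally show ?thesis unfolding r s .
qed

interpretation cpoly_hom: idom_hom "\<lambda>a::'a::idom. [:a:]"
  by unfold_locales (simp_all add: one_pCons)

lemma poly_lift: "poly (map_poly (\<lambda>a. [:a:]) f) [:0,1:] = (f :: 'a::idom poly)"
proof (induction f)
  case (pCons a f)
  have "map_poly (\<lambda>a. [:a:]) (pCons a f) = pCons [:a:] (map_poly (\<lambda>a. [:a:]) f)"
    by (rule cpoly_hom.map_poly_pCons_hom)
  then show ?case using pCons.IH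
    by (simp add: mult_pCons_left)
qed simp

lemma gen_const_lift: "gen_poly n (\<lambda>i. [:u i:]) = map_poly (\<lambda>a. [:a:]) (gen_poly n u :: 'a::idom poly)"
  by (rule poly_eqI) (simp add: coeff_gen_poly coeff_map_poly)

lemma poly_G: "poly (gen_poly n (\<lambda>i. [:u i:])) [:0,1:] = (gen_poly n u :: 'a::idom poly)"
  unfolding gen_const_lift by (rule poly_lift)

lemma poly_G': "poly (pderiv (gen_poly n (\<lambda>i. [:u i:]))) [:0,1:] = pderiv (gen_poly n u :: 'a::idom poly)"
  unfolding gen_const_lift cpoly_hom.map_poly_pderiv[symmetric] by (rule poly_lift)


lemma pderiv_P:
  fixes a b r :: "'a::idom poly"
  assumes "1 \<le> n"
  shows "pderiv (smult a ([:-r,1:] ^ n) + [:b:]) = smult a (smult (of_nat n) ([:-r,1:] ^ (n - 1)))"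
proof -
  obtain m where m: "n = Suc m" using assms by (cases n) auto
  have d1: "pderiv [:-r, 1:] = 1" by (simp add: pderiv_pCons)
  have d2: "pderiv [:b:] = 0" by (simp add: pderiv_pCons)
  show ?thesis unfolding m pderiv_add pderiv_smult pderiv_power_Suc d1 d2 by simp
qed

lemma construct_from:
  fixes u :: "nat \<Rightarrow> 'a::field" and a b r \<rho> :: "'a poly"
  assumes n: "2 \<le> n" and ch: "of_nat n \<noteq> (0::'a)"
   and a: "a \<noteq> 0" "a \<noteq> [:u n:]" and b: "b \<noteq> 0" and \<rho>: "\<rho> \<noteq> 0"
   and e1: "poly (smult a ([:-r,1:] ^ n) + [:b:]) \<rho> = poly (gen_poly n (\<lambda>i. [:u i:])) \<rho>"
   and e2: "poly (pderiv (smult a ([:-r,1:] ^ n) + [:b:])) \<rho> = poly (pderiv (gen_poly n (\<lambda>i. [:u i:]))) \<rho>"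
  shows "\<exists>P Q :: 'a poly poly. degree P \<le> n \<and> coeff P n \<noteq> 0 \<and> degree Q \<le> n \<and>
     (\<forall>i\<le>n. coeff Q i = coeff P i - [:u i:]) \<and> coeff Q n \<noteq> 0 \<and>
     resultant Q (pderiv Q) = 0 \<and> resultant P (pderiv P) \<noteq> 0"
proof -
  define X where "X = [:-r, 1:]"
  define P where "P = smult a (X ^ n) + [:b:]"
  define G where "G = gen_poly n (\<lambda>i. [:u i:])"
  define Q where "Q = P - G"
  have dX: "degree X = 1" unfolding X_def by simp
  have dXn: "degree (X ^ n) = n" using dX by (simp add: degree_power_eq X_def)
  have cXn: "coeff (X ^ n) n = 1"
    using lead_coeff_power[of X n] dXn unfolding X_def by simp
  have dP: "degree P \<le> n" unfolding P_def
    by (rule degree_add_le) (use dXn in \<open>auto intro: order.trans[OF degree_smult_le]\<close>)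
  have cb: "coeff [:b:] n = 0" using n by (simp add: coeff_pCons split: nat.split)
  have cP: "coeff P n = a" using cb cXn unfolding P_def by simp
  have dG: "degree G \<le> n" unfolding G_def by (rule degree_le) (simp add: coeff_gen_poly)
  have cQ: "\<forall>i\<le>n. coeff Q i = coeff P i - [:u i:]"
    unfolding Q_def G_def by (simp add: coeff_gen_poly)
  have cQn: "coeff Q n \<noteq> 0" using cQ cP a by simp
  have dQ: "degree Q \<le> n" unfolding Q_def using dP dG by (rule degree_diff_le)
  have dQ': "degree Q = n" using dQ le_degree[OF cQn] by simp
  have resQ: "resultant Q (pderiv Q) = 0"
  proof (rule resultant_common_root[OF _ _ \<rho>])
    show "poly Q \<rho> = 0" using e1 unfolding Q_def P_def G_def X_def by simp
    show "poly (pderiv Q) \<rho> = 0" using e2 unfolding Q_def P_def G_def X_def by (simp add: pderiv_diff)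
    show "0 < degree Q + degree (pderiv Q)" using dQ' n by simp
  qed
  have cPn: "coeff P n \<noteq> 0" using cP a by simp
  have dP': "degree P = n" using dP le_degree[OF cPn] by simp
  have chp: "(of_nat n :: 'a poly) \<noteq> 0" using ch by (simp add: of_nat_poly)
  have dPd: "degree (pderiv P) = n - 1"
    by (rule degree_pderiv_eq[OF dP']) (use n chp a cP in auto)
  have pP: "pderiv P = smult a (smult (of_nat n) (X ^ (n - 1)))"
    unfolding P_def X_def by (rule pderiv_P) (use n in auto)
  have XX: "X * X ^ (n - 1) = X ^ n" using n by (simp flip: power_Suc)
  have bez: "[:of_nat n:] * P + (- X) * pderiv P = [:of_nat n * b:]"
  proof -
    have 1: "[:of_nat n:] * P = smult (of_nat n) (smult a (X ^ n)) + [:of_nat n * b:]"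
      unfolding P_def by (simp add: smult_add_right)
    have 2: "(- X) * pderiv P = - smult (of_nat n) (smult a (X ^ n))"
      unfolding pP by (simp add: mult_smult_right mult.commute flip: XX)
    show ?thesis unfolding 1 2 by simp
  qed
  have resP: "resultant P (pderiv P) \<noteq> 0"
    by (rule resultant_nonzero[OF bez]) (use chp b dPd n in auto)
  show ?thesis
    by (rule exI[of _ P], rule exI[of _ Q]) (use dP cP a cQ cQn dQ resQ resP in auto)
qed


lemma case_const:
  fixes u :: "nat \<Rightarrow> 'a::field"
  assumes n: "2 \<le> n" and ch: "of_nat n \<noteq> (0::'a)"
    and z: "\<forall>i. 1 \<le> i \<and> i \<le> n \<longrightarrow> u i = 0" and u0: "u 0 \<noteq> 0"
  shows "\<exists>P Q :: 'a poly poly. degree P \<le> n \<and> coeff P n \<noteq> 0 \<and> degree Q \<le> n \<and>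
     (\<forall>i\<le>n. coeff Q i = coeff P i - [:u i:]) \<and> coeff Q n \<noteq> 0 \<and>
     resultant Q (pderiv Q) = 0 \<and> resultant P (pderiv P) \<noteq> 0"
proof -
  have un: "u n = 0" using z n by auto
  have G: "gen_poly n (\<lambda>i. [:u i:]) = [:[:u 0:]:]"
  proof (rule poly_eqI)
    fix i show "coeff (gen_poly n (\<lambda>i. [:u i:])) i = coeff [:[:u 0:]:] i"
      using z by (cases i) (auto simp: coeff_gen_poly)
  qed
  have n1: "n - 1 \<noteq> 0" using n by simp
  have n1': "1 \<le> n" using n by simp
  show ?thesis
  proof (rule construct_from[where n=n and u=u and a=1 and b="[:u 0:]" and r=1 and \<rho>=1])
    show "poly (smult 1 ([:- 1, 1:] ^ n) + [:[:u 0:]:]) 1 = poly (gen_poly n (\<lambda>i. [:u i:])) 1"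
      unfolding G using n by simp
    show "poly (pderiv (smult 1 ([:- 1, 1:] ^ n) + [:[:u 0:]:])) 1 = poly (pderiv (gen_poly n (\<lambda>i. [:u i:]))) 1"
      unfolding G pderiv_P[where n=n and a=1 and r=1 and b="[:u 0:]", OF n1'] using n n1 by (simp add: pderiv_pCons)
  qed (use n ch un u0 in auto)
qed

lemma case_var:
  fixes u :: "nat \<Rightarrow> 'a::field"
  assumes n: "2 \<le> n" and ch: "\<forall>j. 0 < j \<and> j \<le> n \<longrightarrow> of_nat j \<noteq> (0::'a)"
    and i: "1 \<le> i" "i \<le> n" "u i \<noteq> 0"
  shows "\<exists>P Q :: 'a poly poly. degree P \<le> n \<and> coeff P n \<noteq> 0 \<and> degree Q \<le> n \<and>
     (\<forall>i\<le>n. coeff Q i = coeff P i - [:u i:]) \<and> coeff Q n \<noteq> 0 \<and>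
     resultant Q (pderiv Q) = 0 \<and> resultant P (pderiv P) \<noteq> 0"
proof -
  define g where "g = (gen_poly n u :: 'a poly)"
  define a where "a = smult (inverse (of_nat n)) (pderiv g)"
  define b where "b = g - a"
  have chn: "of_nat n \<noteq> (0::'a)" using ch n by auto
  have chi: "of_nat i \<noteq> (0::'a)" using ch i by auto
  have ci: "coeff (pderiv g) (i - 1) = of_nat i * u i"
    using i by (simp add: coeff_pderiv g_def coeff_gen_poly)
  have a0: "a \<noteq> 0"
  proof
    assume "a = 0"
    hence "coeff a (i - 1) = 0" by simp
    thus False using ci chi chn i unfolding a_def by simp
  qed
  have dg: "i \<le> degree g" using i by (intro le_degree) (simp add: g_def coeff_gen_poly)
  have "degree (pderiv g) \<le> degree g - 1"
    by (rule degree_le) (auto simp: coeff_pderiv coeff_eq_0)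
  moreover have "degree a \<le> degree (pderiv g)" unfolding a_def by (rule degree_smult_le)
  ultimately have da: "degree a < degree g" using dg i by linarith
  have b0: "b \<noteq> 0" using da unfolding b_def by auto
  have an: "a \<noteq> [:u n:]"
  proof (cases "u n = 0")
    case True thus ?thesis using a0 by simp
  next
    case False
    have "coeff a (n - 1) = u n"
      using n chn by (simp add: a_def coeff_pderiv g_def coeff_gen_poly)
    moreover have "coeff [:u n:] (n - 1) = 0" using n by (simp add: coeff_pCons split: nat.split)
    ultimately show ?thesis using False by auto
  qed
  have X1: "poly [:- [:-1, 1:], 1:] [:0, 1:] = (1 :: 'a poly)"
    by (simp add: poly_eq_iff coeff_pCons split: nat.split)
  have n1: "1 \<le> n" using n by simp
  have pa: "a * of_nat n = pderiv g"
  proof -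
    have "a * of_nat n = smult (inverse (of_nat n)) (pderiv g) * [:of_nat n:]"
      unfolding a_def of_nat_poly ..
    also have "\<dots> = pderiv g" using chn by (simp add: mult_pCons_right)
    finally show ?thesis .
  qed
  show ?thesis
  proof (rule construct_from[where n=n and u=u and a=a and b=b and r="[:-1,1:]" and \<rho>="[:0,1:]"])
    show "poly (smult a ([:- [:- 1, 1:], 1:] ^ n) + [:b:]) [:0, 1:] =
      poly (gen_poly n (\<lambda>i. [:u i:])) [:0, 1:]"
      unfolding poly_add poly_smult poly_power X1 poly_G by (simp add: b_def g_def)
    show "poly (pderiv (smult a ([:- [:- 1, 1:], 1:] ^ n) + [:b:])) [:0, 1:] =
      poly (pderiv (gen_poly n (\<lambda>i. [:u i:]))) [:0, 1:]"
      unfolding pderiv_P[OF n1] poly_smult poly_power X1 poly_G' g_def[symmetric] pa[symmetric] by simp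
  qed (use n chn a0 an b0 in auto)
qed

lemma no_shift_general:
  fixes u :: "nat \<Rightarrow> 'a::idom" and P Q :: "'a poly poly"
  assumes n: "1 \<le> n" and ch: "of_nat n \<noteq> (0::'a)"
    and H: "msubst (\<lambda>i. mvar i - mconst (u i)) (generic_disc n) = (generic_disc n :: 'a mpoly)"
    and dP: "degree P \<le> n" and cP: "coeff P n \<noteq> 0" and dQ: "degree Q \<le> n"
    and cQ: "\<forall>i\<le>n. coeff Q i = coeff P i - [:u i:]" and cQn: "coeff Q n \<noteq> 0"
    and rQ: "resultant Q (pderiv Q) = 0" and rP: "resultant P (pderiv P) \<noteq> 0"
  shows False
proof -
  define c where "c = (\<lambda>i. coeff P i)"
  define c' where "c' = (\<lambda>i. coeff P i - [:u i:])"
  have gP: "gen_poly n c = P"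
    by (rule poly_eqI) (use dP in \<open>auto simp: coeff_gen_poly c_def coeff_eq_0\<close>)
  have gQ: "gen_poly n c' = Q"
    by (rule poly_eqI) (use dQ cQ in \<open>auto simp: coeff_gen_poly c'_def coeff_eq_0\<close>)
  have sub: "(\<lambda>i. ev c (mvar i - mconst (u i))) = c'"
    by (simp add: c_def c'_def ev_hom.hom_minus)
  have X: "ev c' (generic_disc n) = ev c (generic_disc n)"
    using arg_cong[OF H, of "ev c"] unfolding ev_msubst sub .
  have c'n: "c' n \<noteq> 0" using cQ cQn unfolding c'_def by simp
  have cn: "c n \<noteq> 0" using cP unfolding c_def by simp
  have "c' n * ev c' (generic_disc n) = 0"
    using ev_disc[where c=c', OF n ch c'n] unfolding gQ rQ by simp
  hence X0: "ev c (generic_disc n) = 0" using c'n X by simp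
  have "(-1) ^ (n * (n - 1) div 2) * resultant P (pderiv P) = 0"
    using ev_disc[where c=c, OF n ch cn] unfolding gP X0 by simp
  thus False using rP by simp
qed

theorem mainTheorem17:
  fixes p n :: nat and u :: "nat \<Rightarrow> 'a::{finite,field}"
  assumes "prime p" and "CHAR('a) = p" and "2 \<le> n" and "n < p"
    and "\<exists>i\<le>n. u i \<noteq> 0"
  shows "msubst (\<lambda>i. mvar i - mconst (u i)) (generic_disc n) \<noteq> (generic_disc n :: 'a mpoly)"
proof
  assume H: "msubst (\<lambda>i. mvar i - mconst (u i)) (generic_disc n) = (generic_disc n :: 'a mpoly)"
  have ch: "\<forall>j. 0 < j \<and> j \<le> n \<longrightarrow> of_nat j \<noteq> (0::'a)"
  proof (intro allI impI)
    fix j :: nat assume j: "0 < j \<and> j \<le> n"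
    show "of_nat j \<noteq> (0::'a)"
    proof
      assume "of_nat j = (0::'a)"
      hence "p dvd j" using assms(2) by (simp add: of_nat_eq_0_iff_char_dvd)
      hence "p \<le> j" using j by (simp add: dvd_imp_le)
      thus False using j assms(4) by simp
    qed
  qed
  have chn: "of_nat n \<noteq> (0::'a)" using ch assms(3) by simp
  have n1: "1 \<le> n" using assms(3) by simp
  obtain P Q :: "'a poly poly" where PQ: "degree P \<le> n" "coeff P n \<noteq> 0" "degree Q \<le> n"
     "\<forall>i\<le>n. coeff Q i = coeff P i - [:u i:]" "coeff Q n \<noteq> 0"
     "resultant Q (pderiv Q) = 0" "resultant P (pderiv P) \<noteq> 0"
  proof (cases "\<exists>i. 1 \<le> i \<and> i \<le> n \<and> u i \<noteq> 0")
    case True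
    then obtain i where "1 \<le> i" "i \<le> n" "u i \<noteq> 0" by blast
    from case_var[where u=u, OF assms(3) ch this] that show ?thesis by blast
  next
    case False
    hence z: "\<forall>i. 1 \<le> i \<and> i \<le> n \<longrightarrow> u i = 0" by blast
    from assms(5) obtain i where i: "i \<le> n" "u i \<noteq> 0" by blast
    have "u 0 \<noteq> 0" using i z by (cases i) auto
    from case_const[where u=u, OF assms(3) chn z this] that show ?thesis by blast
  qed
  show False by (rule no_shift_general[OF n1 chn H PQ])
qed

end
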